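(* For every $N\ge 1$, $$\mathbb{E}[\mathcal{R}_2(N)]=H_{N-1},\qquad \mathbb{E}[\mathcal{R}_2(N)^2]=H_{N-1}^2+H_{N-1}-H_{N-1}^{(2)},\qquad \operatorname{Var}[\mathcal{R}_2(N)]=H_{N-1}-H_{N-1}^{(2)},$$ where $H_n=\sum_{i=1}^n 1/i$ and $H_n^{(2)}=\sum_{i=1}^n 1/i^2$ (with $H_0=H_0^{(2)}=0$).
   Context: A random recursive hypergraph (RRH) is the random hypergraph process defined as follows. At size $N=1$ it has vertex set $\{v_1\}$ and edge set $\{\{v_1\}\}$. Given the hypergraph of size $N$ (vertices $v_1,\dots,v_N$, exactly $N$ edges), one chooses an existing edge $e$ uniformly at random, independently of the past, and adds a new vertex $v_{N+1}$ together with the new edge $e\cup\{v_{N+1}\}$. The rank of a vertex $v$ is $\min\{|e| : v\in e\}$. $\mathcal{R}_k(N)$ denotes the number of vertices of rank $k$ in the RRH of size $N$ (equivalently, the number of edges of size $k$). *)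

theory Defs
  imports "HOL-Probability.Probability"
begin

text \<open>A hypergraph of the random recursive hypergraph process is represented by the
  list of its edges in order of creation; vertex v_i is the natural number i.\<close>

definition rrh_step :: "nat set list \<Rightarrow> nat set list pmf" where
  "rrh_step es =
     map_pmf (\<lambda>i. es @ [insert (Suc (length es)) (es ! i)]) (pmf_of_set {..<length es})"

text \<open>Law of the RRH of size N (only meaningful for N \<ge> 1; size 0 is a dummy value).\<close>
fun rrh :: "nat \<Rightarrow> nat set list pmf" where
  "rrh 0 = return_pmf [{1}]"
| "rrh (Suc 0) = return_pmf [{1}]"
| "rrh (Suc (Suc n)) = rrh (Suc n) \<bind> rrh_step"

definition hg_vertices :: "nat set list \<Rightarrow> nat set" where
  "hg_vertices es = \<Union> (set es)"

definition hg_rank :: "nat set list \<Rightarrow> nat \<Rightarrow> nat" where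
  "hg_rank es v = Min (card ` {e \<in> set es. v \<in> e})"

definition rank_count :: "nat \<Rightarrow> nat set list \<Rightarrow> nat" where
  "rank_count k es = card {v \<in> hg_vertices es. hg_rank es v = k}"

definition harm2 :: "nat \<Rightarrow> real" where
  "harm2 n = (\<Sum>i=1..n. 1 / (real i)^2)"

end

theory Submission imports Defs begin
definition inv :: "nat set list \<Rightarrow> bool" where
 "inv es \<longleftrightarrow> es \<noteq> [] \<and> es!0 = {1} \<and> (\<forall>i<length es. Suc i \<in> es!i \<and> 1 \<in> es!i \<and> es!i \<subseteq> {1..Suc i}
    \<and> (\<forall>v\<in>es!i. es!(v-1) \<subseteq> es!i))"

lemma inv_step:
  assumes "inv es" "i < length es"
  shows "inv (es @ [insert (Suc (length es)) (es!i)])"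
proof -
  let ?n = "length es"
  let ?e = "insert (Suc ?n) (es!i)"
  let ?es = "es @ [?e]"
  have I: "\<And>j. j < ?n \<Longrightarrow> Suc j \<in> es!j \<and> 1 \<in> es!j \<and> es!j \<subseteq> {1..Suc j} \<and> (\<forall>v\<in>es!j. es!(v-1) \<subseteq> es!j)"
    using assms(1) unfolding inv_def by blast
  have nth: "\<And>j. j < ?n \<Longrightarrow> ?es!j = es!j" by (simp add: nth_append)
  have nthn: "?es!?n = ?e" by simp
  have A: "Suc j \<in> ?es!j \<and> 1 \<in> ?es!j \<and> ?es!j \<subseteq> {1..Suc j} \<and> (\<forall>v\<in>?es!j. ?es!(v-1) \<subseteq> ?es!j)"
    if j: "j < Suc ?n" for j
  proof (cases "j < ?n")
    case True
    have "\<forall>v\<in>es!j. v - 1 < ?n" using I[OF True] True by force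
    then show ?thesis using I[OF True] nth[OF True] nth by auto
  next
    case False
    then have jn: "j = ?n" using j by simp
    have sub: "es!i \<subseteq> {1..Suc i}" using I[OF assms(2)] by blast
    have "\<forall>v\<in>es!i. v - 1 < ?n \<and> v \<ge> 1" using sub assms(2) by force
    moreover have "\<forall>v\<in>es!i. es!(v-1) \<subseteq> es!i" using I[OF assms(2)] by blast
    ultimately have "\<forall>v\<in>?e. ?es!(v-1) \<subseteq> ?e"
      using nth by auto
    moreover have "1 \<in> ?e" using I[OF assms(2)] by blast
    moreover have "?e \<subseteq> {1..Suc ?n}" using sub assms(2) by auto
    ultimately show ?thesis using jn nthn by auto
  qed
  have "es!0 = {1}" "es \<noteq> []" using assms(1) unfolding inv_def by auto
  then have "?es!0 = {1}" by (simp add: nth_append)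
  then show ?thesis unfolding inv_def using A by auto
qed

lemma rrh_inv: "es \<in> set_pmf (rrh (Suc n)) \<Longrightarrow> inv es \<and> length es = Suc n"
proof (induction n arbitrary: es)
  case 0
  then show ?case by (auto simp: inv_def)
next
  case (Suc n)
  from Suc.prems obtain es0 where e0: "es0 \<in> set_pmf (rrh (Suc n))" and
     es: "es \<in> set_pmf (rrh_step es0)" by auto
  have h: "inv es0" "length es0 = Suc n" using Suc.IH[OF e0] by auto
  obtain i where i: "i \<in> set_pmf (pmf_of_set {..<length es0})"
    and es': "es = es0 @ [insert (Suc (length es0)) (es0!i)]"
    using es unfolding rrh_step_def by auto
  have il: "i < length es0" using i h(2) by (subst (asm) set_pmf_of_set) auto
  show ?case using inv_step[OF h(1) il] es' h(2) by simp
qed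

definition C :: "nat set list \<Rightarrow> nat" where
  "C es = card {i. i < length es \<and> card (es!i) = 2}"

lemma rc_eq: assumes "inv es" shows "rank_count 2 es = C es"
proof -
  let ?n = "length es"
  have I: "\<And>j. j < ?n \<Longrightarrow> Suc j \<in> es!j \<and> 1 \<in> es!j \<and> es!j \<subseteq> {1..Suc j} \<and> (\<forall>v\<in>es!j. es!(v-1) \<subseteq> es!j)"
    using assms(1) unfolding inv_def by blast
  have V: "hg_vertices es = {1..?n}"
  proof
    show "hg_vertices es \<subseteq> {1..?n}"
    proof
      fix v assume "v \<in> hg_vertices es"
      then obtain e where e: "e \<in> set es" "v \<in> e" unfolding hg_vertices_def by blast
      then obtain j where j: "j < ?n" "e = es!j" by (auto simp: in_set_conv_nth)
      have "e \<subseteq> {1..Suc j}" using I[OF j(1)] j(2) by blast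
      then show "v \<in> {1..?n}" using e(2) j(1) by auto
    qed
    show "{1..?n} \<subseteq> hg_vertices es"
    proof
      fix v assume "v \<in> {1..?n}"
      then have vi: "v - 1 < ?n" "Suc (v-1) = v" by auto
      have "es!(v-1) \<in> set es" using vi(1) by (rule nth_mem)
      moreover have "v \<in> es!(v-1)" using I[OF vi(1)] vi(2) by simp
      ultimately show "v \<in> hg_vertices es" unfolding hg_vertices_def by blast
    qed
  qed
  have R: "hg_rank es v = card (es!(v-1))" if v: "v \<in> {1..?n}" for v
  proof -
    have vi: "v - 1 < ?n" "Suc (v-1) = v" using v by auto
    let ?S = "card ` {e \<in> set es. v \<in> e}"
    have fin: "finite ?S" by simp
    have "es!(v-1) \<in> set es" using vi(1) by (rule nth_mem)
    moreover have "v \<in> es!(v-1)" using I[OF vi(1)] vi(2) by simp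
    ultimately have mem: "card (es!(v-1)) \<in> ?S" by blast
    have le: "\<forall>x\<in>?S. card (es!(v-1)) \<le> x"
    proof
      fix x assume "x \<in> ?S"
      then obtain j where j: "j < ?n" "v \<in> es!j" "x = card (es!j)"
        by (auto simp: in_set_conv_nth)
      have "es!(v-1) \<subseteq> es!j" using I[OF j(1)] j(2) by blast
      moreover have "finite (es!j)" using I[OF j(1)] finite_subset by blast
      ultimately show "card (es!(v-1)) \<le> x" using j(3) card_mono by blast
    qed
    show ?thesis unfolding hg_rank_def
      by (rule Min_eqI) (use fin le mem in auto)
  qed
  have "{v \<in> hg_vertices es. hg_rank es v = 2} = Suc ` {i. i < ?n \<and> card (es!i) = 2}"
  proof
    show "{v \<in> hg_vertices es. hg_rank es v = 2} \<subseteq> Suc ` {i. i < ?n \<and> card (es!i) = 2}"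
    proof
      fix v assume "v \<in> {v \<in> hg_vertices es. hg_rank es v = 2}"
      then have "v \<in> {1..?n}" "card (es!(v-1)) = 2" using V R by auto
      then show "v \<in> Suc ` {i. i < ?n \<and> card (es!i) = 2}"
        by (intro image_eqI[of _ _ "v - 1"]) auto
    qed
    show "Suc ` {i. i < ?n \<and> card (es!i) = 2} \<subseteq> {v \<in> hg_vertices es. hg_rank es v = 2}"
      using V R by auto
  qed
  then show ?thesis unfolding rank_count_def C_def by (simp add: card_image)
qed

lemma C_step: assumes "inv es" "i < length es"
  shows "C (es @ [insert (Suc (length es)) (es!i)]) = C es + (if i = 0 then 1 else 0)"
proof -
  let ?n = "length es"
  let ?e = "insert (Suc ?n) (es!i)"
  have I0: "es!0 = {1}" using assms(1) unfolding inv_def by blast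
  have I: "Suc i \<in> es!i \<and> 1 \<in> es!i \<and> es!i \<subseteq> {1..Suc i}"
    using assms unfolding inv_def by blast
  have fin: "finite (es!i)" using I finite_subset[of "es!i" "{1..Suc i}"] by simp
  have nin: "Suc ?n \<notin> es!i"
  proof
    assume "Suc ?n \<in> es!i"
    then have "Suc ?n \<le> Suc i" using I by auto
    then show False using assms(2) by simp
  qed
  have ce: "card ?e = Suc (card (es!i))" using fin nin by simp
  have c1: "card (es!i) = 1 \<longleftrightarrow> i = 0"
  proof
    assume "i = 0" then show "card (es!i) = 1" using I0 by simp
  next
    assume c: "card (es!i) = 1"
    show "i = 0"
    proof (rule ccontr)
      assume "i \<noteq> 0"
      then have "{1, Suc i} \<subseteq> es!i" "card {1, Suc i} = 2" using I by auto
      then have "2 \<le> card (es!i)" using card_mono[OF fin] by metis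
      then show False using c by simp
    qed
  qed
  have e2: "card ?e = 2 \<longleftrightarrow> i = 0" using ce c1 by simp
  have S: "{j. j < Suc ?n \<and> card ((es @ [?e])!j) = 2} =
     {j. j < ?n \<and> card (es!j) = 2} \<union> {j. j = ?n \<and> card ?e = 2}"
    by (auto simp: nth_append less_Suc_eq)
  have D: "{j. j < ?n \<and> card (es!j) = 2} \<inter> {j. j = ?n \<and> card ?e = 2} = {}" by auto
  have B: "card {j. j = ?n \<and> card ?e = 2} = (if i = 0 then 1 else 0)"
    using e2 by auto
  have "C (es @ [?e]) = card ({j. j < ?n \<and> card (es!j) = 2} \<union> {j. j = ?n \<and> card ?e = 2})"
    unfolding C_def using S by simp
  also have "\<dots> = C es + card {j. j = ?n \<and> card ?e = 2}"
    unfolding C_def by (rule card_Un_disjoint) (use D in auto)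
  finally show ?thesis using B by simp
qed


lemma fin_rrh: "finite (set_pmf (rrh n))"
proof (induction n rule: rrh.induct)
  case (3 n)
  have "finite (set_pmf (rrh_step es))" if "es \<in> set_pmf (rrh (Suc n))" for es
  proof -
    have "length es = Suc n" using rrh_inv[OF that] by simp
    then show ?thesis unfolding rrh_step_def by (simp add: set_pmf_of_set lessThan_empty_iff)
  qed
  then show ?case using 3 by (simp add: set_bind_pmf finite_UN_I)
qed auto

definition Y :: "nat \<Rightarrow> nat pmf" where
  "Y n = map_pmf (rank_count 2) (rrh (Suc n))"

lemma fin_Y: "finite (set_pmf (Y n))"
  unfolding Y_def using fin_rrh by simp

lemma Y_Suc: "Y (Suc n) = Y n \<bind> (\<lambda>k. map_pmf (\<lambda>i. k + (if i = 0 then 1 else 0)) (pmf_of_set {..<Suc n}))"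
proof -
  have "Y (Suc n) = rrh (Suc n) \<bind> (\<lambda>es. map_pmf (rank_count 2) (rrh_step es))"
    unfolding Y_def by (simp add: map_bind_pmf)
  also have "\<dots> = rrh (Suc n) \<bind> (\<lambda>es. map_pmf (\<lambda>i. rank_count 2 es + (if i = 0 then 1 else 0)) (pmf_of_set {..<Suc n}))"
  proof (rule bind_pmf_cong[OF refl])
    fix es assume es: "es \<in> set_pmf (rrh (Suc n))"
    have h: "inv es" "length es = Suc n" using rrh_inv[OF es] by auto
    have "map_pmf (rank_count 2) (rrh_step es) =
       map_pmf (\<lambda>i. rank_count 2 (es @ [insert (Suc (length es)) (es ! i)])) (pmf_of_set {..<length es})"
      unfolding rrh_step_def by (simp add: pmf.map_comp o_def)
    also have "\<dots> = map_pmf (\<lambda>i. rank_count 2 es + (if i = 0 then 1 else 0)) (pmf_of_set {..<length es})"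
    proof (rule pmf.map_cong[OF refl])
      fix i assume "i \<in> set_pmf (pmf_of_set {..<length es})"
      then have il: "i < length es" using h(2) by (subst (asm) set_pmf_of_set) auto
      show "rank_count 2 (es @ [insert (Suc (length es)) (es ! i)]) = rank_count 2 es + (if i = 0 then 1 else 0)"
        using rc_eq[OF inv_step[OF h(1) il]] rc_eq[OF h(1)] C_step[OF h(1) il] by simp
    qed
    finally show "map_pmf (rank_count 2) (rrh_step es) = map_pmf (\<lambda>i. rank_count 2 es + (if i = 0 then 1 else 0)) (pmf_of_set {..<Suc n})"
      using h(2) by simp
  qed
  also have "\<dots> = Y n \<bind> (\<lambda>k. map_pmf (\<lambda>i. k + (if i = 0 then 1 else 0)) (pmf_of_set {..<Suc n}))"
    unfolding Y_def by (simp add: bind_map_pmf)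
  finally show ?thesis .
qed

lemma E_Suc:
  fixes h :: "nat \<Rightarrow> real"
  shows "measure_pmf.expectation (Y (Suc n)) h =
         measure_pmf.expectation (Y n) (\<lambda>a. (h (a+1) + real n * h a) / real (Suc n))"
proof -
  have inner: "measure_pmf.expectation (map_pmf (\<lambda>i. k + (if i = 0 then 1 else 0)) (pmf_of_set {..<Suc n})) h
      = (h (k+1) + real n * h k) / real (Suc n)" for k
  proof -
    have "measure_pmf.expectation (map_pmf (\<lambda>i. k + (if i = 0 then 1 else 0)) (pmf_of_set {..<Suc n})) h
        = (\<Sum>i<Suc n. h (k + (if i = 0 then 1 else 0))) / real (card {..<Suc n})"
      by (simp only: integral_map_pmf, subst integral_pmf_of_set) auto
    also have "(\<Sum>i<Suc n. h (k + (if i = 0 then 1 else 0))) = h (k+1) + real n * h k"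
      by (subst sum.lessThan_Suc_shift) simp
    finally show ?thesis by simp
  qed
  have "measure_pmf.expectation (Y (Suc n)) h =
     (\<Sum>a\<in>set_pmf (Y n). pmf (Y n) a *\<^sub>R measure_pmf.expectation (map_pmf (\<lambda>i. a + (if i = 0 then 1 else 0)) (pmf_of_set {..<Suc n})) h)"
    unfolding Y_Suc by (rule pmf_expectation_bind[OF fin_Y]) (auto simp: set_pmf_of_set lessThan_empty_iff)
  also have "\<dots> = (\<Sum>a\<in>set_pmf (Y n). pmf (Y n) a *\<^sub>R ((h (a+1) + real n * h a) / real (Suc n)))"
    using inner by simp
  also have "\<dots> = measure_pmf.expectation (Y n) (\<lambda>a. (h (a+1) + real n * h a) / real (Suc n))"
    by (rule integral_measure_pmf[OF fin_Y, symmetric]) auto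
  finally show ?thesis .
qed

lemma Y0: "Y 0 = return_pmf 0"
proof -
  have "hg_vertices [{1}] = {1}" unfolding hg_vertices_def by simp
  moreover have "hg_rank [{1}] 1 = 1" unfolding hg_rank_def by simp
  ultimately have "rank_count 2 [{1}] = 0" unfolding rank_count_def by auto
  then show ?thesis unfolding Y_def by simp
qed

lemma E1: "measure_pmf.expectation (Y n) real = harm n"
proof (induction n)
  case 0
  then show ?case by (simp add: Y0 harm_def)
next
  case (Suc n)
  have "measure_pmf.expectation (Y (Suc n)) real =
     measure_pmf.expectation (Y n) (\<lambda>a. real a + 1 / real (Suc n))"
    unfolding E_Suc by (rule Bochner_Integration.integral_cong) (auto simp: field_simps)
  also have "\<dots> = measure_pmf.expectation (Y n) real + 1 / real (Suc n)"
    by (subst Bochner_Integration.integral_add) (auto intro: integrable_measure_pmf_finite[OF fin_Y])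
  finally show ?case using Suc by (simp add: harm_Suc inverse_eq_divide)
qed

lemma alg: "(m::real) > 0 \<Longrightarrow> H^2 + H - S + 2 / m * H + 1 / m = (H + 1 / m)^2 + (H + 1 / m) - (S + 1 / m^2)"
  by (simp add: field_simps power2_eq_square)

lemma E2: "measure_pmf.expectation (Y n) (\<lambda>a. (real a)^2) = (harm n)^2 + harm n - harm2 n"
proof (induction n)
  case 0
  then show ?case by (simp add: Y0 harm_def harm2_def)
next
  case (Suc n)
  have "measure_pmf.expectation (Y (Suc n)) (\<lambda>a. (real a)^2) =
     measure_pmf.expectation (Y n) (\<lambda>a. (real a)^2 + (2 / real (Suc n)) * real a + 1 / real (Suc n))"
    unfolding E_Suc by (rule Bochner_Integration.integral_cong) (auto simp: field_simps power2_eq_square)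
  also have "\<dots> = measure_pmf.expectation (Y n) (\<lambda>a. (real a)^2) + (2 / real (Suc n)) * measure_pmf.expectation (Y n) real + 1 / real (Suc n)"
    by (simp add: integrable_measure_pmf_finite[OF fin_Y])
  finally have "measure_pmf.expectation (Y (Suc n)) (\<lambda>a. (real a)^2) = (harm n)^2 + harm n - harm2 n + 2 / real (Suc n) * harm n + 1 / real (Suc n)"
    using Suc E1 by simp
  moreover have "harm2 (Suc n) = harm2 n + 1 / (real (Suc n))^2" unfolding harm2_def by simp
  moreover have "harm (Suc n) = harm n + 1 / real (Suc n)" by (simp add: harm_Suc inverse_eq_divide)
  moreover have "(harm n)^2 + harm n - harm2 n + 2 / real (Suc n) * harm n + 1 / real (Suc n)
     = (harm n + 1 / real (Suc n))^2 + (harm n + 1 / real (Suc n)) - (harm2 n + 1 / (real (Suc n))^2)"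
    by (rule alg) simp
  ultimately show ?case by simp
qed


theorem mainTheorem8:
  fixes N :: nat
  assumes "N \<ge> 1"
  shows "measure_pmf.expectation (rrh N) (\<lambda>es. real (rank_count 2 es)) = harm (N - 1)
       \<and> measure_pmf.expectation (rrh N) (\<lambda>es. (real (rank_count 2 es))^2)
           = (harm (N - 1))^2 + harm (N - 1) - harm2 (N - 1)
       \<and> measure_pmf.variance (rrh N) (\<lambda>es. real (rank_count 2 es))
           = harm (N - 1) - harm2 (N - 1)"
proof -
  obtain n where N: "N = Suc n" using assms by (cases N) auto
  have e1: "measure_pmf.expectation (rrh N) (\<lambda>es. real (rank_count 2 es)) = harm (N - 1)"
    using E1[of n] unfolding Y_def N by simp
  have e2: "measure_pmf.expectation (rrh N) (\<lambda>es. (real (rank_count 2 es))^2)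
           = (harm (N - 1))^2 + harm (N - 1) - harm2 (N - 1)"
    using E2[of n] unfolding Y_def N by simp
  have "measure_pmf.variance (rrh N) (\<lambda>es. real (rank_count 2 es)) =
     measure_pmf.expectation (rrh N) (\<lambda>es. (real (rank_count 2 es))^2) -
     (measure_pmf.expectation (rrh N) (\<lambda>es. real (rank_count 2 es)))^2"
    by (rule measure_pmf.variance_eq) (auto intro: integrable_measure_pmf_finite[OF fin_rrh])
  then show ?thesis using e1 e2 by simp
qed

end
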